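(* Let $A=D+N\in\mathcal{M}_n(\mathbb{H})$, where $D$ is a diagonal matrix with real entries and $N$ is a strictly upper triangular (hence nilpotent) matrix that is cycle-free. Then $W(A)$ is convex.
   Context: $\mathbb{H}$ denotes the real quaternions. The numerical range of $A\in\mathcal{M}_n(\mathbb{H})$ is $W(A)=\{\mathbf{x}^*A\mathbf{x}:\mathbf{x}\in\mathbb{H}^n,\ \mathbf{x}^*\mathbf{x}=1\}$. The graph $\mathcal{G}_N$ of $N=[a_{ij}]$ is the undirected graph on $\{1,\dots,n\}$ with an edge between $i$ and $j$ (a loop if $i=j$) whenever $a_{ij}\ne0$ or $a_{ji}\ne0$; $N$ is cycle-free if $\mathcal{G}_N$ contains no cycle. *)

theory Defs
  imports "HOL-Analysis.Analysis"
begin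

datatype quat = Quat (Re: real) (Im1: real) (Im2: real) (Im3: real)

lemma quat_eq_iff: "x = y \<longleftrightarrow> Re x = Re y \<and> Im1 x = Im1 y \<and> Im2 x = Im2 y \<and> Im3 x = Im3 y"
  by (cases x; cases y) auto

instantiation quat :: real_algebra_1
begin

definition "0 = Quat 0 0 0 0"
definition "1 = Quat 1 0 0 0"
definition "x + y = Quat (Re x + Re y) (Im1 x + Im1 y) (Im2 x + Im2 y) (Im3 x + Im3 y)"
definition "- x = Quat (- Re x) (- Im1 x) (- Im2 x) (- Im3 x)"
definition "x - y = Quat (Re x - Re y) (Im1 x - Im1 y) (Im2 x - Im2 y) (Im3 x - Im3 y)"
definition "scaleR r x = Quat (r * Re x) (r * Im1 x) (r * Im2 x) (r * Im3 x)"
definition "x * y = Quat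
   (Re x * Re y - Im1 x * Im1 y - Im2 x * Im2 y - Im3 x * Im3 y)
   (Re x * Im1 y + Im1 x * Re y + Im2 x * Im3 y - Im3 x * Im2 y)
   (Re x * Im2 y - Im1 x * Im3 y + Im2 x * Re y + Im3 x * Im1 y)
   (Re x * Im3 y + Im1 x * Im2 y - Im2 x * Im1 y + Im3 x * Re y)"

instance
  by intro_classes
    (auto simp: quat_eq_iff zero_quat_def one_quat_def plus_quat_def uminus_quat_def
       minus_quat_def scaleR_quat_def times_quat_def algebra_simps)

end

definition qcnj :: "quat \<Rightarrow> quat" where
  "qcnj x = Quat (Re x) (- Im1 x) (- Im2 x) (- Im3 x)"

text \<open>An n x n quaternion matrix is represented as a function nat \<Rightarrow> nat \<Rightarrow> quat}
  of which only the entries with indices below n matter; likewise vectors in H^n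
  are functions nat \<Rightarrow> quat restricted to indices below n.\<close>

definition numerical_range :: "nat \<Rightarrow> (nat \<Rightarrow> nat \<Rightarrow> quat) \<Rightarrow> quat set" where
  "numerical_range n A =
     {(\<Sum>i<n. \<Sum>j<n. qcnj (x i) * A i j * x j) | x :: nat \<Rightarrow> quat.
        (\<Sum>i<n. qcnj (x i) * x i) = 1}"

definition mat_adj :: "(nat \<Rightarrow> nat \<Rightarrow> quat) \<Rightarrow> nat \<Rightarrow> nat \<Rightarrow> bool" where
  "mat_adj N i j \<longleftrightarrow> N i j \<noteq> 0 \<or> N j i \<noteq> 0"

definition cycle_free :: "nat \<Rightarrow> (nat \<Rightarrow> nat \<Rightarrow> quat) \<Rightarrow> bool" where
  "cycle_free n N \<longleftrightarrow>
     (\<forall>i<n. \<not> mat_adj N i i) \<and>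
     \<not> (\<exists>vs. 3 \<le> length vs \<and> distinct vs \<and> set vs \<subseteq> {..<n} \<and>
            (\<forall>k<length vs. mat_adj N (vs ! k) (vs ! ((k + 1) mod length vs))))"

end

theory Submission
  imports Defs "HOL-Library.Transitive_Closure_Table"
begin


lemmas qdefs = quat_eq_iff zero_quat_def one_quat_def plus_quat_def uminus_quat_def
       minus_quat_def scaleR_quat_def times_quat_def qcnj_def

lemma quat_Re_sum: "Re (sum f I) = (\<Sum>i\<in>I. Re (f i))"
  by (induction I rule: infinite_finite_induct) (auto simp: zero_quat_def plus_quat_def)
lemma quat_Im1_sum: "Im1 (sum f I) = (\<Sum>i\<in>I. Im1 (f i))"
  by (induction I rule: infinite_finite_induct) (auto simp: zero_quat_def plus_quat_def)
lemma quat_Im2_sum: "Im2 (sum f I) = (\<Sum>i\<in>I. Im2 (f i))"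
  by (induction I rule: infinite_finite_induct) (auto simp: zero_quat_def plus_quat_def)
lemma quat_Im3_sum: "Im3 (sum f I) = (\<Sum>i\<in>I. Im3 (f i))"
  by (induction I rule: infinite_finite_induct) (auto simp: zero_quat_def plus_quat_def)

lemma quat_comps [simp]:
  "Re (x + y) = Re x + Re y" "Im1 (x + y) = Im1 x + Im1 y" "Im2 (x + y) = Im2 x + Im2 y" "Im3 (x + y) = Im3 x + Im3 y"
  "Re (x * y) = Re x * Re y - Im1 x * Im1 y - Im2 x * Im2 y - Im3 x * Im3 y"
  "Im1 (x * y) = Re x * Im1 y + Im1 x * Re y + Im2 x * Im3 y - Im3 x * Im2 y"
  "Im2 (x * y) = Re x * Im2 y - Im1 x * Im3 y + Im2 x * Re y + Im3 x * Im1 y"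
  "Im3 (x * y) = Re x * Im3 y + Im1 x * Im2 y - Im2 x * Im1 y + Im3 x * Re y"
  "Re (r *\<^sub>R x) = r * Re x" "Im1 (r *\<^sub>R x) = r * Im1 x" "Im2 (r *\<^sub>R x) = r * Im2 x" "Im3 (r *\<^sub>R x) = r * Im3 x"
  "Re (qcnj x) = Re x" "Im1 (qcnj x) = - Im1 x" "Im2 (qcnj x) = - Im2 x" "Im3 (qcnj x) = - Im3 x"
  "Re 0 = 0" "Im1 0 = 0" "Im2 0 = 0" "Im3 0 = 0"
  "Re 1 = 1" "Im1 1 = 0" "Im2 1 = 0" "Im3 1 = 0"
  "Re (x - y) = Re x - Re y" "Im1 (x - y) = Im1 x - Im1 y" "Im2 (x - y) = Im2 x - Im2 y" "Im3 (x - y) = Im3 x - Im3 y"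
  by (simp_all add: qdefs)

lemma qcnj_mult: "qcnj (a * b) = qcnj b * qcnj a"
  by (simp add: quat_eq_iff algebra_simps)

lemma quat_in_Reals: "(x::quat) \<in> \<real> \<longleftrightarrow> Im1 x = 0 \<and> Im2 x = 0 \<and> Im3 x = 0"
proof
  assume "x \<in> \<real>" then obtain r where "x = of_real r" by (auto elim: Reals_cases)
  then show "Im1 x = 0 \<and> Im2 x = 0 \<and> Im3 x = 0" by (simp add: of_real_def)
next
  assume "Im1 x = 0 \<and> Im2 x = 0 \<and> Im3 x = 0"
  then have "x = of_real (Re x)" by (simp add: of_real_def quat_eq_iff)
  then show "x \<in> \<real>" by (metis Reals_of_real)
qed

lemma quat_unit_comm: "qcnj p * p = 1 \<Longrightarrow> p * qcnj p = 1"
  by (simp add: quat_eq_iff)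




definition bf :: "nat \<Rightarrow> (nat \<Rightarrow> nat \<Rightarrow> complex) \<Rightarrow> (nat \<Rightarrow> complex) \<Rightarrow> (nat \<Rightarrow> complex) \<Rightarrow> complex" where
  "bf n A x y = (\<Sum>i<n. \<Sum>j<n. cnj (x i) * A i j * y j)"
definition ip :: "nat \<Rightarrow> (nat \<Rightarrow> complex) \<Rightarrow> (nat \<Rightarrow> complex) \<Rightarrow> complex" where
  "ip n x y = (\<Sum>i<n. cnj (x i) * y i)"
definition WC :: "nat \<Rightarrow> (nat \<Rightarrow> nat \<Rightarrow> complex) \<Rightarrow> complex set" where
  "WC n A = {bf n A x x | x. ip n x x = 1}"

lemma bf_expand:
  "bf n A (\<lambda>i. a * x i + b * y i) (\<lambda>i. a * x i + b * y i) =
    cnj a * a * bf n A x x + cnj a * b * bf n A x y + cnj b * a * bf n A y x + cnj b * b * bf n A y y"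
  unfolding bf_def
  by (simp add: algebra_simps sum.distrib sum_distrib_left)

lemma ip_expand:
  "ip n (\<lambda>i. a * x i + b * y i) (\<lambda>i. a * x i + b * y i) =
    cnj a * a * ip n x x + cnj a * b * ip n x y + cnj b * a * ip n y x + cnj b * b * ip n y y"
  unfolding ip_def
  by (simp add: algebra_simps sum.distrib sum_distrib_left)

lemma bf_scale: "bf n A (\<lambda>i. c * x i) (\<lambda>i. c * x i) = cnj c * c * bf n A x x"
  using bf_expand[of n A c x 0 x] by simp
lemma ip_scale: "ip n (\<lambda>i. c * x i) (\<lambda>i. c * x i) = cnj c * c * ip n x x"
  using ip_expand[of n c x 0 x] by simp

lemma ip_real: "ip n x x = complex_of_real (\<Sum>i<n. (cmod (x i))\<^sup>2)"
  unfolding ip_def of_real_sum by (intro sum.cong refl) (metis complex_norm_square mult.commute)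

lemma ip_zero: "ip n x x = 0 \<Longrightarrow> i < n \<Longrightarrow> x i = 0"
proof -
  assume "ip n x x = 0" "i < n"
  then have "(\<Sum>i<n. (cmod (x i))\<^sup>2) = 0" unfolding ip_real by (simp only: of_real_eq_0_iff)
  then show "x i = 0" using \<open>i < n\<close> by (simp add: sum_nonneg_eq_0_iff)
qed

lemma bf_shift:
  shows "bf n (\<lambda>i j. (A i j - (if i = j then w else 0)) / d) x y = (bf n A x y - w * ip n x y) / d"
proof -
  have e: "cnj (x i) * ((A i j - (if i = j then w else 0)) / d) * y j =
     (cnj (x i) * A i j * y j) / d - (if j = i then cnj (x i) * w * y i / d else 0)" for i j
    by (auto simp: diff_divide_distrib algebra_simps)
  have "bf n (\<lambda>i j. (A i j - (if i = j then w else 0)) / d) x y =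
        (\<Sum>i<n. (\<Sum>j<n. cnj (x i) * A i j * y j / d) - cnj (x i) * w * y i / d)"
    unfolding bf_def e sum_subtractf by simp
  also have "\<dots> = (bf n A x y - w * ip n x y) / d"
    unfolding bf_def ip_def by (simp add: sum_subtractf diff_divide_distrib sum_divide_distrib sum_distrib_left mult.assoc) (simp add: mult.left_commute)
  finally show ?thesis .
qed

lemma cnj_mult_self: "cnj c * c = complex_of_real ((cmod c)\<^sup>2)"
  by (metis complex_norm_square mult.commute)

lemma WC_convex_aux:
  fixes v :: real
  assumes x: "ip n x x = 1" and y: "ip n y y = 1" and v: "0 \<le> v" "v \<le> 1"
  shows "(1 - complex_of_real v) * bf n A x x + complex_of_real v * bf n A y y \<in> WC n A"
proof (cases "bf n A x x = bf n A y y")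
  case True
  have "(1 - v) * bf n A x x + v * bf n A y y = bf n A x x" using True by (simp add: algebra_simps)
  then show ?thesis using x unfolding WC_def by auto
next
  case False
  define w1 where "w1 = bf n A x x"
  define w2 where "w2 = bf n A y y"
  define d where "d = w2 - w1"
  have d0: "d \<noteq> 0" using False by (simp add: d_def w1_def w2_def)
  define B where "B = (\<lambda>i j. (A i j - (if i = j then w1 else 0)) / d)"
  have Bsh: "bf n B u u' = (bf n A u u' - w1 * ip n u u') / d" for u u'
    unfolding B_def using bf_shift by simp
  have Bx: "bf n B x x = 0" using Bsh[of x x] x by (simp add: w1_def)
  have By: "bf n B y y = 1" using Bsh[of y y] y d0 by (simp add: w2_def d_def)
  define g where "g = bf n B x y"
  define h where "h = bf n B y x"
  define k where "k = h - cnj g"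
  define \<sigma> where "\<sigma> = (if k = 0 then 1 else cnj k / complex_of_real (cmod k))"
  have \<sigma>1: "cnj \<sigma> * \<sigma> = 1"
    by (auto simp: \<sigma>_def cnj_mult_self norm_divide power_divide)
  have \<sigma>k: "Im (\<sigma> * k) = 0"
    by (auto simp: \<sigma>_def)
  define z where "z = (\<lambda>\<tau>::real. \<lambda>i. (complex_of_real (1 - \<tau>) * \<sigma>) * x i + complex_of_real \<tau> * y i)"
  have Bz: "bf n B (z \<tau>) (z \<tau>) = complex_of_real (\<tau>\<^sup>2 + \<tau> * (1 - \<tau>) * Complex.Re (cnj \<sigma> * g + \<sigma> * h))" for \<tau>
  proof -
    have e: "bf n B (z \<tau>) (z \<tau>) = complex_of_real \<tau> ^ 2 + complex_of_real (\<tau> * (1 - \<tau>)) * (cnj \<sigma> * g + \<sigma> * h)"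
      unfolding z_def bf_expand Bx By g_def[symmetric] h_def[symmetric]
      using \<sigma>1 by (simp add: algebra_simps power2_eq_square)
    have "Im (cnj \<sigma> * g + \<sigma> * h) = Im (\<sigma> * k)"
      by (simp add: k_def algebra_simps)
    then have "Im (cnj \<sigma> * g + \<sigma> * h) = 0" using \<sigma>k by simp
    then show ?thesis unfolding e by (simp add: complex_eq_iff power2_eq_square)
  qed
  define N where "N = (\<lambda>\<tau>. Complex.Re (ip n (z \<tau>) (z \<tau>)))"
  have Nreal: "ip n (z \<tau>) (z \<tau>) = complex_of_real (N \<tau>)" for \<tau>
    unfolding N_def ip_real by simp
  have Npos: "N \<tau> > 0" if "0 \<le> \<tau>" "\<tau> \<le> 1" for \<tau>
  proof (rule ccontr)
    assume "\<not> N \<tau> > 0"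
    moreover have "N \<tau> \<ge> 0" unfolding N_def ip_real by (simp add: sum_nonneg)
    ultimately have "ip n (z \<tau>) (z \<tau>) = 0" using Nreal by simp
    then have zz: "\<And>i. i < n \<Longrightarrow> z \<tau> i = 0" using ip_zero by blast
    show False
    proof (cases "\<tau> = 0")
      case True
      have \<sigma>0: "\<sigma> \<noteq> 0" using \<sigma>1 by auto
      have "x i = 0" if "i < n" for i
      proof -
        have "\<sigma> * x i = 0" using zz[OF that] True by (simp add: z_def)
        then show ?thesis using \<sigma>0 by simp
      qed
      then have "ip n x x = 0" by (simp add: ip_def)
      then show False using x by simp
    next
      case False
      define c where "c = - (complex_of_real (1 - \<tau>) * \<sigma>) / complex_of_real \<tau>"
      have yc: "\<And>i. i < n \<Longrightarrow> y i = c * x i"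
        using zz False unfolding z_def c_def by (auto simp: field_simps add_eq_0_iff)
      have "ip n y y = ip n (\<lambda>i. c * x i) (\<lambda>i. c * x i)"
        unfolding ip_def by (intro sum.cong) (auto simp: yc)
      then have cc: "cnj c * c = 1" using x y ip_scale by simp
      have "bf n A y y = bf n A (\<lambda>i. c * x i) (\<lambda>i. c * x i)"
        unfolding bf_def by (intro sum.cong) (auto simp: yc)
      then have "bf n A y y = bf n A x x" using cc bf_scale by simp
      then show False using \<open>bf n A x x \<noteq> bf n A y y\<close> by simp
    qed
  qed
  define G where "G = (\<lambda>\<tau>. Complex.Re (bf n B (z \<tau>) (z \<tau>)) / N \<tau>)"
  define c0 where "c0 = Complex.Re (cnj \<sigma> * g + \<sigma> * h)"
  define e0 where "e0 = Complex.Re (cnj \<sigma> * ip n x y + \<sigma> * ip n y x)"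
  have Nform: "N \<tau> = (1 - \<tau>)\<^sup>2 + \<tau>\<^sup>2 + \<tau> * (1 - \<tau>) * e0" for \<tau>
  proof -
    have "ip n (z \<tau>) (z \<tau>) = complex_of_real ((1 - \<tau>)\<^sup>2) * (cnj \<sigma> * \<sigma>)
       + complex_of_real (\<tau> * (1 - \<tau>)) * (cnj \<sigma> * ip n x y + \<sigma> * ip n y x) + complex_of_real (\<tau>\<^sup>2)"
      unfolding z_def ip_expand x y by (simp add: algebra_simps power2_eq_square)
    then show ?thesis unfolding N_def e0_def using \<sigma>1 by simp
  qed
  have Gform: "G \<tau> = (\<tau>\<^sup>2 + \<tau> * (1 - \<tau>) * c0) / ((1 - \<tau>)\<^sup>2 + \<tau>\<^sup>2 + \<tau> * (1 - \<tau>) * e0)" for \<tau>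
    unfolding G_def Bz Nform c0_def by simp
  have cont: "continuous_on {0..1} G"
    unfolding Gform
    by (intro continuous_intros) (metis Npos Nform atLeastAtMost_iff less_irrefl)
  have z0: "z 0 = (\<lambda>i. \<sigma> * x i)" by (simp add: z_def)
  have z1: "z 1 = y" by (simp add: z_def)
  have G0: "G 0 = 0" unfolding G_def z0 bf_scale Bx by simp
  have G1: "G 1 = 1" unfolding G_def z1 By N_def using y by simp
  obtain \<tau> where \<tau>: "0 \<le> \<tau>" "\<tau> \<le> 1" "G \<tau> = v"
    using IVT'[of G 0 v 1] G0 G1 v cont by auto
  have Np: "N \<tau> > 0" using Npos \<tau> by simp
  define c where "c = complex_of_real (1 / sqrt (N \<tau>))"
  define z' where "z' = (\<lambda>i. c * z \<tau> i)"
  have cc: "cnj c * c = complex_of_real (1 / N \<tau>)"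
  proof -
    have "cnj c * c = complex_of_real (1 / sqrt (N \<tau>) * (1 / sqrt (N \<tau>)))"
      unfolding c_def by (simp only: complex_cnj_complex_of_real of_real_mult)
    also have "1 / sqrt (N \<tau>) * (1 / sqrt (N \<tau>)) = 1 / (sqrt (N \<tau>) * sqrt (N \<tau>))"
      by simp
    also have "sqrt (N \<tau>) * sqrt (N \<tau>) = N \<tau>"
      using Np by simp
    finally show ?thesis .
  qed
  have "ip n z' z' = 1"
  proof -
    have "(1 / N \<tau>) * (N \<tau>) = 1" using Np by simp
    then show ?thesis unfolding z'_def ip_scale cc Nreal by (metis of_real_mult of_real_1)
  qed
  moreover have "bf n A z' z' = (1 - complex_of_real v) * w1 + complex_of_real v * w2"
  proof -
    have h1: "bf n A (z \<tau>) (z \<tau>) = d * bf n B (z \<tau>) (z \<tau>) + w1 * ip n (z \<tau>) (z \<tau>)"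
      using Bsh[of "z \<tau>" "z \<tau>"] d0 by (simp add: field_simps)
    have re: "Complex.Re (bf n B (z \<tau>) (z \<tau>)) = v * N \<tau>"
      using \<tau>(3) Np unfolding G_def by (simp add: divide_eq_eq)
    have im: "Im (bf n B (z \<tau>) (z \<tau>)) = 0" unfolding Bz by simp
    have h2: "bf n B (z \<tau>) (z \<tau>) = complex_of_real (v * N \<tau>)"
      using re im by (simp add: complex_eq_iff)
    have m1: "complex_of_real (1 / N \<tau>) * complex_of_real (v * N \<tau>) = complex_of_real v"
    proof -
      have "(1 / N \<tau>) * (v * N \<tau>) = v" using Np by simp
      then show ?thesis by (metis of_real_mult)
    qed
    have m2: "complex_of_real (1 / N \<tau>) * complex_of_real (N \<tau>) = 1"
    proof -
      have "(1 / N \<tau>) * (N \<tau>) = 1" using Np by simp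
      then show ?thesis by (metis of_real_mult of_real_1)
    qed
    have "bf n A z' z' = complex_of_real (1 / N \<tau>) * (d * complex_of_real (v * N \<tau>) + w1 * complex_of_real (N \<tau>))"
      unfolding z'_def bf_scale cc h1 h2 Nreal by simp
    also have "\<dots> = d * (complex_of_real (1 / N \<tau>) * complex_of_real (v * N \<tau>)) + w1 * (complex_of_real (1 / N \<tau>) * complex_of_real (N \<tau>))"
      by (simp only: algebra_simps)
    also have "\<dots> = d * complex_of_real v + w1" unfolding m1 m2 by simp
    also have "\<dots> = (1 - complex_of_real v) * w1 + complex_of_real v * w2"
      by (simp add: d_def algebra_simps)
    finally show ?thesis .
  qed
  ultimately show ?thesis unfolding WC_def w1_def w2_def by force
qed

lemma WC_convex: "convex (WC n A)"
  unfolding convex_alt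
proof (intro ballI allI impI)
  fix a b and u :: real
  assume "a \<in> WC n A" "b \<in> WC n A" "0 \<le> u \<and> u \<le> 1"
  then obtain x y where "ip n x x = 1" "ip n y y = 1" "a = bf n A x x" "b = bf n A y y"
    unfolding WC_def by blast
  moreover have "(1 - u) *\<^sub>R a + u *\<^sub>R b = (1 - complex_of_real u) * a + complex_of_real u * b"
    by (simp add: scaleR_conv_of_real)
  ultimately show "(1 - u) *\<^sub>R a + u *\<^sub>R b \<in> WC n A"
    using WC_convex_aux[of n x y u A] \<open>0 \<le> u \<and> u \<le> 1\<close> by simp
qed




definition qf :: "nat \<Rightarrow> (nat \<Rightarrow> nat \<Rightarrow> quat) \<Rightarrow> (nat \<Rightarrow> quat) \<Rightarrow> quat" where
  "qf n A x = (\<Sum>i<n. \<Sum>j<n. qcnj (x i) * A i j * x j)"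
definition qn :: "nat \<Rightarrow> (nat \<Rightarrow> quat) \<Rightarrow> quat" where
  "qn n x = (\<Sum>i<n. qcnj (x i) * x i)"

lemma numerical_range_qf: "numerical_range n A = {qf n A x | x. qn n x = 1}"
  unfolding numerical_range_def qf_def qn_def by simp

lemmas quat_sums = quat_Re_sum quat_Im1_sum quat_Im2_sum quat_Im3_sum

locale realmat =
  fixes n :: nat and R :: "nat \<Rightarrow> nat \<Rightarrow> quat"
  assumes real: "\<And>i j. i < n \<Longrightarrow> j < n \<Longrightarrow> R i j \<in> \<real>"
begin

definition Rc where "Rc i j = complex_of_real (quat.Re (R i j))"

lemma Rim: "i < n \<Longrightarrow> j < n \<Longrightarrow> Im1 (R i j) = 0 \<and> Im2 (R i j) = 0 \<and> Im3 (R i j) = 0"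
  using real quat_in_Reals by blast

lemma embed:
  assumes "ip n y y = 1"
  shows "Quat (Complex.Re (bf n Rc y y)) (Im (bf n Rc y y)) 0 0 \<in> numerical_range n R"
proof -
  define X where "X = (\<lambda>i. Quat (Complex.Re (y i)) (Im (y i)) 0 0)"
  have "qn n X = 1"
  proof -
    have "Complex.Re (ip n y y) = 1" "Im (ip n y y) = 0" using assms by simp_all
    then show ?thesis unfolding qn_def ip_def
      by (simp add: quat_eq_iff quat_sums X_def algebra_simps)
  qed
  moreover have "qf n R X = Quat (Complex.Re (bf n Rc y y)) (Im (bf n Rc y y)) 0 0"
    unfolding quat_eq_iff qf_def bf_def quat_sums Re_sum Im_sum
    by (intro conjI sum.cong refl; simp add: X_def Rc_def Rim algebra_simps)
  ultimately show ?thesis unfolding numerical_range_qf by force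
qed

lemma scale_unit:
  assumes "ip n y y = complex_of_real s" "s > 0"
  shows "\<exists>y'. ip n y' y' = 1 \<and> bf n A y y = complex_of_real s * bf n A y' y'"
proof -
  define c where "c = complex_of_real (1 / sqrt s)"
  define y' where "y' = (\<lambda>i. c * y i)"
  have sq: "sqrt s * sqrt s = s" using assms by simp
  have cc: "cnj c * c = complex_of_real (1 / s)"
  proof -
    have "cnj c * c = complex_of_real (1 / sqrt s * (1 / sqrt s))"
      unfolding c_def by (simp only: complex_cnj_complex_of_real of_real_mult)
    also have "1 / sqrt s * (1 / sqrt s) = 1 / (sqrt s * sqrt s)" by simp
    finally show ?thesis unfolding sq .
  qed
  have "ip n y' y' = 1"
  proof -
    have "(1 / s) * s = 1" using assms by simp
    then show ?thesis unfolding y'_def ip_scale cc assms by (metis of_real_mult of_real_1)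
  qed
  moreover have "bf n A y y = complex_of_real s * bf n A y' y'"
  proof -
    have "s * (1 / s) = 1" using assms by simp
    then have "complex_of_real s * complex_of_real (1 / s) = 1" by (metis of_real_mult of_real_1)
    moreover have "bf n A y' y' = complex_of_real (1 / s) * bf n A y y" unfolding y'_def bf_scale cc ..
    ultimately show ?thesis by (simp only: mult.assoc[symmetric] mult_1)
  qed
  ultimately show ?thesis by blast
qed

lemma ip_nonneg: "\<exists>s\<ge>0. ip n y y = complex_of_real s"
proof -
  have "(\<Sum>i<n. (cmod (y i))\<^sup>2) \<ge> 0" by (intro sum_nonneg) simp
  then show ?thesis using ip_real[of n y] by blast
qed

lemma ip_zero_bf: "ip n y y = 0 \<Longrightarrow> bf n A y y = 0"
  using ip_zero[of n y] unfolding bf_def by simp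

lemma project:
  assumes "qn n X = 1"
  shows "Complex (quat.Re (qf n R X)) (Im1 (qf n R X)) \<in> WC n Rc"
proof -
  define y where "y = (\<lambda>i. Complex (quat.Re (X i)) (Im1 (X i)))"
  define z where "z = (\<lambda>i. Complex (Im2 (X i)) (- Im3 (X i)))"
  have e1: "Complex (quat.Re (qf n R X)) (Im1 (qf n R X)) = bf n Rc y y + bf n Rc z z"
    unfolding complex_eq_iff qf_def bf_def quat_sums Re_sum Im_sum sum.distrib[symmetric]
    by (intro conjI sum.cong refl; simp add: y_def z_def Rc_def Rim algebra_simps)
  have e2: "ip n y y + ip n z z = 1"
  proof -
    have "quat.Re (qn n X) = 1" using assms by simp
    then show ?thesis unfolding complex_eq_iff qn_def ip_def quat_sums Re_sum Im_sum sum.distrib[symmetric]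
      by (simp add: y_def z_def algebra_simps)
  qed
  obtain s where s: "s \<ge> 0" "ip n y y = complex_of_real s" using ip_nonneg by blast
  obtain t where t: "t \<ge> 0" "ip n z z = complex_of_real t" using ip_nonneg by blast
  have st: "s + t = 1" using e2 s t by (metis of_real_add of_real_eq_1_iff)
  show ?thesis
  proof (cases "s = 0")
    case True
    then have "bf n Rc y y = 0" using ip_zero_bf s by simp
    moreover have "ip n z z = 1" using t st True by simp
    ultimately show ?thesis unfolding e1 WC_def by auto
  next
    case False
    show ?thesis
    proof (cases "t = 0")
      case True
      then have "bf n Rc z z = 0" using ip_zero_bf t by simp
      moreover have "ip n y y = 1" using s st True by simp
      ultimately show ?thesis unfolding e1 WC_def by auto
    next
      case False': False
      obtain y' where y': "ip n y' y' = 1" "bf n Rc y y = complex_of_real s * bf n Rc y' y'"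
        using scale_unit[of y s] s False by auto
      obtain z' where z': "ip n z' z' = 1" "bf n Rc z z = complex_of_real t * bf n Rc z' z'"
        using scale_unit[of z t] t False' by auto
      have "(1 - complex_of_real t) * bf n Rc y' y' + complex_of_real t * bf n Rc z' z' \<in> WC n Rc"
        using WC_convex_aux[OF y'(1) z'(1), of t] t st s(1) by simp
      moreover have "1 - complex_of_real t = complex_of_real s" proof -
        have "s = 1 - t" using st by simp
        then show ?thesis by simp
      qed
      ultimately show ?thesis unfolding e1 y' z' by simp
    qed
  qed
qed

lemma slice_convex:
  assumes "Quat a1 b1 0 0 \<in> numerical_range n R" "Quat a2 b2 0 0 \<in> numerical_range n R"
    and "0 \<le> v" "v \<le> 1"
  shows "Quat ((1 - v) * a1 + v * a2) ((1 - v) * b1 + v * b2) 0 0 \<in> numerical_range n R"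
proof -
  have "Complex a1 b1 \<in> WC n Rc"
    using assms(1) project unfolding numerical_range_qf by (force simp: quat_eq_iff)
  moreover have "Complex a2 b2 \<in> WC n Rc"
    using assms(2) project unfolding numerical_range_qf by (force simp: quat_eq_iff)
  ultimately have "(1 - v) *\<^sub>R Complex a1 b1 + v *\<^sub>R Complex a2 b2 \<in> WC n Rc"
    using WC_convex[of n Rc] assms(3,4) unfolding convex_alt by blast
  then obtain y where "ip n y y = 1" "bf n Rc y y = Complex ((1 - v) * a1 + v * a2) ((1 - v) * b1 + v * b2)"
    unfolding WC_def by (auto simp: complex_eq_iff)
  then show ?thesis using embed by force
qed

end



lemma rot_mem:
  assumes "w \<in> numerical_range n A" "qcnj p * p = 1"
  shows "qcnj p * w * p \<in> numerical_range n A"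
proof -
  obtain x where x: "w = qf n A x" "qn n x = 1" using assms(1) unfolding numerical_range_qf by blast
  define x' where "x' = (\<lambda>i. x i * p)"
  have "qn n x' = qcnj p * qn n x * p"
    unfolding qn_def x'_def qcnj_mult by (simp add: sum_distrib_left sum_distrib_right mult.assoc)
  then have "qn n x' = 1" using x assms(2) by simp
  moreover have "qf n A x' = qcnj p * w * p"
    unfolding x(1) qf_def x'_def qcnj_mult by (simp add: sum_distrib_left sum_distrib_right mult.assoc)
  ultimately show ?thesis unfolding numerical_range_qf by force
qed

lemma rot_core:
  assumes msq: "m\<^sup>2 = v1\<^sup>2 + v2\<^sup>2 + v3\<^sup>2" and m0: "m \<ge> 0" and ne: "v1 \<noteq> - m"
  shows "\<exists>p. qcnj p * p = 1 \<and> qcnj p * Quat a v1 v2 v3 * p = Quat a m 0 0"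
proof -
  define L where "L = (v1 + m)\<^sup>2 + v2\<^sup>2 + v3\<^sup>2"
  have L2: "L = 2 * m * (m + v1)" unfolding L_def using msq by (simp add: power2_eq_square algebra_simps)
  have "m > 0" using m0 ne msq by (cases "m = 0") (auto simp: power2_eq_square add_nonneg_eq_0_iff)
  moreover have "m + v1 > 0"
  proof -
    have "v1\<^sup>2 \<le> m\<^sup>2" using msq by simp
    then have "\<bar>v1\<bar> \<le> m" using m0 by (metis abs_of_nonneg real_sqrt_abs real_sqrt_le_mono real_sqrt_abs)
    then show ?thesis using ne by linarith
  qed
  ultimately have Lp: "L > 0" unfolding L2 by simp
  define c where "c = 1 / sqrt L"
  have c2: "c * c * L = 1" unfolding c_def using Lp
    by (simp add: field_simps)
  define p where "p = Quat 0 ((v1 + m) * c) (v2 * c) (v3 * c)"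
  have "qcnj p * p = 1"
    using c2 unfolding p_def L_def by (simp add: quat_eq_iff) (simp add: algebra_simps power2_eq_square)
  moreover have "qcnj p * Quat a v1 v2 v3 * p = Quat a m 0 0"
    unfolding p_def quat_eq_iff
    apply (simp add: c2)
    using c2 msq unfolding L_def by (simp add: power2_eq_square; algebra)
  ultimately show ?thesis by blast
qed

definition imn :: "quat \<Rightarrow> real" where
  "imn w = sqrt ((Im1 w)\<^sup>2 + (Im2 w)\<^sup>2 + (Im3 w)\<^sup>2)"

lemma rot_exists: "\<exists>p. qcnj p * p = 1 \<and> qcnj p * w * p = Quat (quat.Re w) (imn w) 0 0"
proof -
  define m where "m = imn w"
  have msq: "m\<^sup>2 = (Im1 w)\<^sup>2 + (Im2 w)\<^sup>2 + (Im3 w)\<^sup>2" unfolding m_def imn_def by simp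
  have m0: "m \<ge> 0" unfolding m_def imn_def by simp
  have w: "w = Quat (quat.Re w) (Im1 w) (Im2 w) (Im3 w)" by (simp add: quat_eq_iff)
  show ?thesis
  proof (cases "Im1 w = - m")
    case False
    then show ?thesis using rot_core[OF msq m0 False, of "quat.Re w"] w unfolding m_def by metis
  next
    case True
    then have "(Im2 w)\<^sup>2 + (Im3 w)\<^sup>2 = 0" using msq by simp
    then have "Im2 w = 0" "Im3 w = 0" by (simp_all add: add_nonneg_eq_0_iff)
    define p where "p = Quat 0 0 1 0"
    have "qcnj p * p = 1" "qcnj p * w * p = Quat (quat.Re w) m 0 0"
      unfolding p_def using True \<open>Im2 w = 0\<close> \<open>Im3 w = 0\<close> by (simp_all add: quat_eq_iff)
    then show ?thesis unfolding m_def by blast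
  qed
qed

lemma flip_mem:
  assumes "Quat a b 0 0 \<in> numerical_range n A"
  shows "Quat a (- b) 0 0 \<in> numerical_range n A"
proof -
  have "qcnj (Quat 0 0 1 0) * Quat 0 0 1 0 = 1" "qcnj (Quat 0 0 1 0) * Quat a b 0 0 * Quat 0 0 1 0 = Quat a (- b) 0 0"
    by (simp_all add: quat_eq_iff)
  then show ?thesis using rot_mem[OF assms] by metis
qed

lemma tri3:
  "sqrt ((x1 + y1)\<^sup>2 + (x2 + y2)\<^sup>2 + (x3 + y3)\<^sup>2) \<le> sqrt (x1\<^sup>2 + x2\<^sup>2 + x3\<^sup>2) + sqrt (y1\<^sup>2 + y2\<^sup>2 + y3\<^sup>2)"
proof -
  define A where "A = sqrt (x1\<^sup>2 + x2\<^sup>2 + x3\<^sup>2)"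
  define B where "B = sqrt (y1\<^sup>2 + y2\<^sup>2 + y3\<^sup>2)"
  have A0: "A \<ge> 0" and B0: "B \<ge> 0" unfolding A_def B_def by simp_all
  have A2: "A\<^sup>2 = x1\<^sup>2 + x2\<^sup>2 + x3\<^sup>2" unfolding A_def by simp
  have B2: "B\<^sup>2 = y1\<^sup>2 + y2\<^sup>2 + y3\<^sup>2" unfolding B_def by simp
  have cs: "x1 * y1 + x2 * y2 + x3 * y3 \<le> A * B"
  proof (cases "x1 * y1 + x2 * y2 + x3 * y3 \<le> 0")
    case True then show ?thesis using A0 B0 by (meson mult_nonneg_nonneg order_trans)
  next
    case False
    have "(x1 * y1 + x2 * y2 + x3 * y3)\<^sup>2 \<le> (A * B)\<^sup>2"
    proof -
      have "(A * B)\<^sup>2 - (x1 * y1 + x2 * y2 + x3 * y3)\<^sup>2 =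
        (x1 * y2 - x2 * y1)\<^sup>2 + (x1 * y3 - x3 * y1)\<^sup>2 + (x2 * y3 - x3 * y2)\<^sup>2"
        unfolding power_mult_distrib A2 B2 by (simp add: power2_eq_square algebra_simps)
      then show ?thesis by (smt (verit) zero_le_power2)
    qed
    then show ?thesis using A0 B0 by (meson mult_nonneg_nonneg power2_le_imp_le)
  qed
  have "(x1 + y1)\<^sup>2 + (x2 + y2)\<^sup>2 + (x3 + y3)\<^sup>2 \<le> (A + B)\<^sup>2"
    using cs A2 B2 by (simp add: power2_eq_square algebra_simps)
  then have "sqrt ((x1 + y1)\<^sup>2 + (x2 + y2)\<^sup>2 + (x3 + y3)\<^sup>2) \<le> sqrt ((A + B)\<^sup>2)"
    by (rule real_sqrt_le_mono)
  then show ?thesis using A0 B0 unfolding A_def[symmetric] B_def[symmetric] by simp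
qed




context realmat begin

lemma W_convex: "convex (numerical_range n R)"
  unfolding convex_alt
proof (intro ballI allI impI)
  fix w1 w2 and u :: real
  assume w1: "w1 \<in> numerical_range n R" and w2: "w2 \<in> numerical_range n R" and u: "0 \<le> u \<and> u \<le> 1"
  define W where "W = numerical_range n R"
  have toslice: "Quat (quat.Re w) (imn w) 0 0 \<in> W" if "w \<in> W" for w
    using rot_exists[of w] rot_mem[of w n R] that unfolding W_def by metis
  define T where "T = (1 - u) *\<^sub>R w1 + u *\<^sub>R w2"
  define \<alpha> where "\<alpha> = quat.Re T"
  define \<gamma> where "\<gamma> = imn T"
  define M where "M = (1 - u) * imn w1 + u * imn w2"
  have imn0: "imn w \<ge> 0" for w unfolding imn_def by simp
  have \<gamma>M: "\<gamma> \<le> M"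
  proof -
    have "\<gamma> = sqrt (((1 - u) * Im1 w1 + u * Im1 w2)\<^sup>2 + ((1 - u) * Im2 w1 + u * Im2 w2)\<^sup>2 + ((1 - u) * Im3 w1 + u * Im3 w2)\<^sup>2)"
      unfolding \<gamma>_def imn_def T_def by simp
    also have "\<dots> \<le> sqrt (((1 - u) * Im1 w1)\<^sup>2 + ((1 - u) * Im2 w1)\<^sup>2 + ((1 - u) * Im3 w1)\<^sup>2)
                 + sqrt ((u * Im1 w2)\<^sup>2 + (u * Im2 w2)\<^sup>2 + (u * Im3 w2)\<^sup>2)"
      by (rule tri3)
    also have "sqrt (((1 - u) * Im1 w1)\<^sup>2 + ((1 - u) * Im2 w1)\<^sup>2 + ((1 - u) * Im3 w1)\<^sup>2) = (1 - u) * imn w1"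
    proof -
      have "((1 - u) * Im1 w1)\<^sup>2 + ((1 - u) * Im2 w1)\<^sup>2 + ((1 - u) * Im3 w1)\<^sup>2 = (1 - u)\<^sup>2 * ((Im1 w1)\<^sup>2 + (Im2 w1)\<^sup>2 + (Im3 w1)\<^sup>2)"
        by (simp only: power_mult_distrib distrib_left)
      then show ?thesis unfolding imn_def using u by (simp add: real_sqrt_mult)
    qed
    also have "sqrt ((u * Im1 w2)\<^sup>2 + (u * Im2 w2)\<^sup>2 + (u * Im3 w2)\<^sup>2) = u * imn w2"
    proof -
      have "(u * Im1 w2)\<^sup>2 + (u * Im2 w2)\<^sup>2 + (u * Im3 w2)\<^sup>2 = u\<^sup>2 * ((Im1 w2)\<^sup>2 + (Im2 w2)\<^sup>2 + (Im3 w2)\<^sup>2)"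
        by (simp only: power_mult_distrib distrib_left)
      then show ?thesis unfolding imn_def using u by (simp add: real_sqrt_mult)
    qed
    finally show ?thesis unfolding M_def .
  qed
  have \<gamma>0: "\<gamma> \<ge> 0" unfolding \<gamma>_def by (rule imn0)
  define s where "s = (if M = 0 then 0 else \<gamma> / M)"
  have M0: "M \<ge> 0" unfolding M_def using u imn0 by (simp add: add_nonneg_nonneg)
  have s01: "0 \<le> s" "s \<le> 1" using \<gamma>M \<gamma>0 M0 by (auto simp: s_def divide_le_eq_1)
  have sM: "s * M = \<gamma>" using \<gamma>M \<gamma>0 by (auto simp: s_def)
  have P: "Quat (quat.Re w) (s * imn w) 0 0 \<in> W" if "w \<in> W" for w
  proof -
    have a: "Quat (quat.Re w) (imn w) 0 0 \<in> W" using toslice that .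
    have b: "Quat (quat.Re w) (- imn w) 0 0 \<in> W" using flip_mem a unfolding W_def by blast
    have "Quat ((1 - (1 - s) / 2) * quat.Re w + (1 - s) / 2 * quat.Re w)
               ((1 - (1 - s) / 2) * imn w + (1 - s) / 2 * (- imn w)) 0 0 \<in> W"
      using slice_convex[OF a[unfolded W_def] b[unfolded W_def], of "(1 - s) / 2"] s01 unfolding W_def by simp
    moreover have "(1 - (1 - s) / 2) * quat.Re w + (1 - s) / 2 * quat.Re w = quat.Re w"
      "(1 - (1 - s) / 2) * imn w + (1 - s) / 2 * (- imn w) = s * imn w"
      by (simp_all add: field_simps)
    ultimately show ?thesis by simp
  qed
  have "Quat ((1 - u) * quat.Re w1 + u * quat.Re w2) ((1 - u) * (s * imn w1) + u * (s * imn w2)) 0 0 \<in> W"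
    using slice_convex[OF P[OF w1[folded W_def], unfolded W_def] P[OF w2[folded W_def], unfolded W_def], of u] u
    unfolding W_def by simp
  moreover have "(1 - u) * (s * imn w1) + u * (s * imn w2) = \<gamma>"
    using sM unfolding M_def by (simp add: algebra_simps)
  moreover have "(1 - u) * quat.Re w1 + u * quat.Re w2 = \<alpha>" unfolding \<alpha>_def T_def by simp
  ultimately have TS: "Quat \<alpha> \<gamma> 0 0 \<in> W" by simp
  obtain p where p: "qcnj p * p = 1" "qcnj p * T * p = Quat \<alpha> \<gamma> 0 0"
    using rot_exists[of T] unfolding \<alpha>_def \<gamma>_def by blast
  have pp: "p * qcnj p = 1" using quat_unit_comm p(1) by simp
  have "qcnj (qcnj p) * Quat \<alpha> \<gamma> 0 0 * qcnj p = T"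
  proof -
    have cc: "qcnj (qcnj p) = p" by (simp add: qcnj_def quat_eq_iff)
    have "p * (qcnj p * T * p) * qcnj p = (p * qcnj p) * T * (p * qcnj p)" by (simp add: mult.assoc)
    then show ?thesis unfolding cc p(2) pp by simp
  qed
  moreover have "qcnj (qcnj p) * qcnj p = 1" using pp by (simp add: qcnj_def quat_eq_iff)
  ultimately have "T \<in> W" using rot_mem[OF TS[unfolded W_def]] unfolding W_def by metis
  then show "(1 - u) *\<^sub>R w1 + u *\<^sub>R w2 \<in> numerical_range n R" unfolding T_def W_def .
qed

end



lemma real_conj_unit:
  assumes "x \<in> \<real>" "qcnj p * p = 1"
  shows "qcnj p * x * p \<in> \<real>"
proof -
  have "Im1 x = 0" "Im2 x = 0" "Im3 x = 0" using assms(1) quat_in_Reals by auto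
  then have "qcnj p * x * p = quat.Re x *\<^sub>R (qcnj p * p)" by (simp add: quat_eq_iff algebra_simps)
  then show ?thesis using assms(2) by (simp add: quat_in_Reals)
qed

lemma path_nth:
  assumes "rtrancl_path r x xs y"
  shows "(\<forall>k < length xs. r ((x # xs) ! k) (xs ! k)) \<and> last (x # xs) = y"
  using assms
proof (induction)
  case (base x) then show ?case by simp
next
  case (step x y ys z)
  then show ?case by (auto simp: nth_Cons split: nat.splits)
qed

lemma path_set:
  assumes "rtrancl_path r x xs y" "\<And>a b. r a b \<Longrightarrow> b \<in> S"
  shows "set xs \<subseteq> S"
  using assms by (induction) auto

lemma forest_phase:
  fixes N :: "nat \<Rightarrow> nat \<Rightarrow> quat"
  assumes "\<forall>i<n. \<forall>j<n. j \<le> i \<longrightarrow> N i j = 0" "cycle_free n N"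
  shows "\<exists>q. (\<forall>i<n. qcnj (q i) * q i = 1) \<and> (\<forall>i<n. \<forall>j<n. qcnj (q i) * N i j * q j \<in> \<real>)"
proof -
  have "\<And>N. card {(i, j). i < n \<and> j < n \<and> N i j \<noteq> 0} = k \<Longrightarrow> \<forall>i<n. \<forall>j<n. j \<le> i \<longrightarrow> N i j = 0 \<Longrightarrow> cycle_free n N \<Longrightarrow>
     \<exists>q. (\<forall>i<n. qcnj (q i) * q i = 1) \<and> (\<forall>i<n. \<forall>j<n. qcnj (q i) * N i j * q j \<in> \<real>)" for k
  proof (induction k)
    case 0
    have fin: "finite {(i, j). i < n \<and> j < n \<and> N i j \<noteq> 0}"
      by (rule finite_subset[of _ "{..<n} \<times> {..<n}"]) auto
    then have "\<forall>i<n. \<forall>j<n. N i j = 0" using 0(1) by auto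
    moreover have "qcnj 1 = (1::quat)" by (simp add: quat_eq_iff)
    ultimately show ?case by (intro exI[of _ "\<lambda>_. 1"]) simp
  next
    case (Suc k)
    let ?S = "\<lambda>N. {(i, j). i < n \<and> j < n \<and> N i j \<noteq> (0::quat)}"
    have fin: "finite (?S N)"
      by (rule finite_subset[of _ "{..<n} \<times> {..<n}"]) auto
    have "?S N \<noteq> {}" using Suc.prems(1) by (intro notI) simp
    then obtain x where "x \<in> ?S N" by blast
    then obtain i j where ij: "(i, j) \<in> ?S N" by (cases x) blast
    have i: "i < n" and j: "j < n" and Nij: "N i j \<noteq> 0" using ij by auto
    have ilj: "i < j" using Suc.prems(2) i j Nij by (meson not_le)
    define N' where "N' = (\<lambda>a b. if a = i \<and> b = j then 0 else N a b)"
    have SN': "?S N' = ?S N - {(i, j)}" unfolding N'_def by auto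
    have cN': "card (?S N') = k" unfolding SN' using Suc.prems(1) fin ij by simp
    have uN': "\<forall>a<n. \<forall>b<n. b \<le> a \<longrightarrow> N' a b = 0" using Suc.prems(2) unfolding N'_def by auto
    have N'N: "N' a b \<noteq> 0 \<Longrightarrow> N a b \<noteq> 0" for a b
      unfolding N'_def by (cases "a = i \<and> b = j") simp_all
    have adj': "mat_adj N' a b \<Longrightarrow> mat_adj N a b" for a b
      using N'N[of a b] N'N[of b a] unfolding mat_adj_def by blast
    have cfN': "cycle_free n N'"
      unfolding cycle_free_def
    proof (intro conjI notI allI impI)
      fix a assume "a < n" "mat_adj N' a a"
      then show False using Suc.prems(3) adj' unfolding cycle_free_def by blast
    next
      assume "\<exists>vs. 3 \<le> length vs \<and> distinct vs \<and> set vs \<subseteq> {..<n} \<and>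
            (\<forall>k<length vs. mat_adj N' (vs ! k) (vs ! ((k + 1) mod length vs)))"
      then obtain vs where "3 \<le> length vs" "distinct vs" "set vs \<subseteq> {..<n}"
            "\<forall>k<length vs. mat_adj N' (vs ! k) (vs ! ((k + 1) mod length vs))" by blast
      moreover have "\<forall>k<length vs. mat_adj N (vs ! k) (vs ! ((k + 1) mod length vs))"
        using calculation(4) adj' by blast
      ultimately show False using Suc.prems(3) unfolding cycle_free_def by blast
    qed
    obtain q' where q'1: "\<forall>a<n. qcnj (q' a) * q' a = 1"
      and q'2: "\<forall>a<n. \<forall>b<n. qcnj (q' a) * N' a b * q' b \<in> \<real>"
      using Suc.IH[OF cN' uN' cfN'] by blast
    define r where "r = (\<lambda>a b. a < n \<and> b < n \<and> mat_adj N' a b)"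
    define C where "C = {b. r\<^sup>*\<^sup>* j b}"
    have rsym: "r a b \<Longrightarrow> r b a" for a b unfolding r_def mat_adj_def by auto
    have Cclosed: "a \<in> C \<longleftrightarrow> b \<in> C" if "r a b" for a b
    proof
      assume "a \<in> C" then show "b \<in> C" using that unfolding C_def by (auto intro: rtranclp.rtrancl_into_rtrancl)
    next
      assume "b \<in> C" then show "a \<in> C" using rsym[OF that] unfolding C_def by (auto intro: rtranclp.rtrancl_into_rtrancl)
    qed
    have jC: "j \<in> C" unfolding C_def by simp
    have iC: "i \<notin> C"
    proof
      assume "i \<in> C"
      then obtain xs where "rtrancl_path r j xs i" unfolding C_def rtranclp_eq_rtrancl_path by blast
      then obtain xs' where p: "rtrancl_path r j xs' i" and dist: "distinct (j # xs')"
        by (rule rtrancl_path_distinct)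
      have pn: "\<forall>k < length xs'. r ((j # xs') ! k) (xs' ! k)" and lst: "last (j # xs') = i"
        using path_nth[OF p] by auto
      have ne: "xs' \<noteq> []" using lst ilj by auto
      have "xs' \<noteq> [i]"
      proof
        assume "xs' = [i]"
        then have "r j i" using pn by auto
        then have "N' j i \<noteq> 0 \<or> N' i j \<noteq> 0" unfolding r_def mat_adj_def by auto
        moreover have "N' j i = 0" using Suc.prems(2) i j ilj unfolding N'_def by auto
        moreover have "N' i j = 0" unfolding N'_def by simp
        ultimately show False by simp
      qed
      then have len: "length xs' \<ge> 2" using ne lst by (cases xs') (auto simp: Suc_le_eq)
      define vs where "vs = j # xs'"
      have "set xs' \<subseteq> {..<n}" using path_set[OF p, of "{..<n}"] unfolding r_def by auto
      then have setvs: "set vs \<subseteq> {..<n}" using j unfolding vs_def by auto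
      have cyc: "\<forall>k<length vs. mat_adj N (vs ! k) (vs ! ((k + 1) mod length vs))"
      proof (intro allI impI)
        fix k assume k: "k < length vs"
        show "mat_adj N (vs ! k) (vs ! ((k + 1) mod length vs))"
        proof (cases "k + 1 < length vs")
          case True
          then have "(k + 1) mod length vs = k + 1" by simp
          moreover have "r (vs ! k) (xs' ! k)" using pn True unfolding vs_def by auto
          ultimately show ?thesis using adj' unfolding r_def vs_def by auto
        next
          case False
          then have kk: "k = length vs - 1" using k by simp
          then have "k + 1 = length vs" using k by simp
          then have "(k + 1) mod length vs = 0" by simp
          moreover have "vs ! k = i"
          proof -
            have "vs ! k = last vs" using kk unfolding vs_def by (metis last_conv_nth list.distinct(1))
            then show ?thesis using lst unfolding vs_def by simp
          qed
          moreover have "vs ! 0 = j" unfolding vs_def by simp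
          ultimately show ?thesis using Nij unfolding mat_adj_def by simp
        qed
      qed
      have "3 \<le> length vs" using len unfolding vs_def by simp
      then show False using Suc.prems(3) cyc setvs dist unfolding cycle_free_def vs_def by blast
    qed
    define c0 where "c0 = qcnj (q' i) * N i j * q' j"
    have c0ne: "c0 \<noteq> 0"
    proof
      assume "c0 = 0"
      then have "q' i * c0 * qcnj (q' j) = 0" by simp
      moreover have "q' i * c0 * qcnj (q' j) = (q' i * qcnj (q' i)) * N i j * (q' j * qcnj (q' j))"
        unfolding c0_def by (simp add: mult.assoc)
      ultimately show False using quat_unit_comm q'1 i j Nij by simp
    qed
    define L where "L = quat.Re (qcnj c0 * c0)"
    have Lpos: "L > 0"
    proof -
      have "L = (quat.Re c0)\<^sup>2 + (Im1 c0)\<^sup>2 + (Im2 c0)\<^sup>2 + (Im3 c0)\<^sup>2" unfolding L_def by (simp add: power2_eq_square)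
      moreover have "\<not> (quat.Re c0 = 0 \<and> Im1 c0 = 0 \<and> Im2 c0 = 0 \<and> Im3 c0 = 0)" using c0ne by (simp add: quat_eq_iff)
      ultimately show ?thesis by (smt (verit) not_sum_power2_lt_zero sum_power2_eq_zero_iff zero_le_power2)
    qed
    define p where "p = (1 / sqrt L) *\<^sub>R qcnj c0"
    have sq: "1 / sqrt L * (1 / sqrt L) * L = 1" using Lpos by (simp add: field_simps)
    have Lf: "L = (quat.Re c0)\<^sup>2 + (Im1 c0)\<^sup>2 + (Im2 c0)\<^sup>2 + (Im3 c0)\<^sup>2" unfolding L_def by (simp add: power2_eq_square)
    have "qcnj p * p = Quat ((1 / sqrt L * (1 / sqrt L)) * L) 0 0 0"
      unfolding p_def quat_eq_iff by (simp add: Lf power2_eq_square algebra_simps del: times_divide_eq_left times_divide_eq_right divide_divide_eq_left)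
    then have punit: "qcnj p * p = 1" unfolding sq by (simp add: quat_eq_iff)
    have c0p: "c0 * p \<in> \<real>"
      unfolding p_def quat_in_Reals by (simp add: algebra_simps)
    define q where "q = (\<lambda>a. if a \<in> C then q' a * p else q' a)"
    have "\<forall>a<n. qcnj (q a) * q a = 1"
    proof (intro allI impI)
      fix a assume a: "a < n"
      show "qcnj (q a) * q a = 1"
      proof (cases "a \<in> C")
        case True
        have "qcnj (q a) * q a = qcnj p * (qcnj (q' a) * q' a) * p"
          unfolding q_def using True by (simp add: qcnj_mult mult.assoc)
        then show ?thesis using q'1 a punit by simp
      qed (use q'1 a q_def in simp)
    qed
    moreover have "\<forall>a<n. \<forall>b<n. qcnj (q a) * N a b * q b \<in> \<real>"
    proof (intro allI impI)
      fix a b assume a: "a < n" and b: "b < n"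
      show "qcnj (q a) * N a b * q b \<in> \<real>"
      proof (cases "a = i \<and> b = j")
        case True
        have "qcnj (q a) * N a b * q b = c0 * p"
          unfolding q_def c0_def using True iC jC by (simp add: mult.assoc)
        then show ?thesis using c0p by simp
      next
        case False
        then have NN: "N a b = N' a b" unfolding N'_def by auto
        show ?thesis
        proof (cases "N' a b = 0")
          case True then show ?thesis using NN by simp
        next
          case False
          then have "r a b" unfolding r_def mat_adj_def using a b by simp
          then have ab: "a \<in> C \<longleftrightarrow> b \<in> C" by (rule Cclosed)
          show ?thesis
          proof (cases "a \<in> C")
            case True
            then have "qcnj (q a) * N a b * q b = qcnj p * (qcnj (q' a) * N' a b * q' b) * p"
              unfolding q_def NN using ab by (simp add: qcnj_mult mult.assoc)
            then show ?thesis using real_conj_unit[OF _ punit] q'2 a b by simp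
          next
            case False
            then have "qcnj (q a) * N a b * q b = qcnj (q' a) * N' a b * q' b"
              unfolding q_def NN using ab by simp
            then show ?thesis using q'2 a b by simp
          qed
        qed
      qed
    qed
    ultimately show ?case by blast
  qed
  then show ?thesis using assms by blast
qed

lemma diag_unitary:
  assumes u: "\<forall>i<n. qcnj (q i) * q i = 1"
  shows "numerical_range n (\<lambda>a b. qcnj (q a) * A a b * q b) = numerical_range n A"
proof -
  have u': "\<forall>i<n. q i * qcnj (q i) = 1" using u quat_unit_comm by blast
  have cc: "qcnj (qcnj x) = x" for x by (simp add: qcnj_def quat_eq_iff)
  show ?thesis
  proof (intro equalityI subsetI)
    fix w assume "w \<in> numerical_range n (\<lambda>a b. qcnj (q a) * A a b * q b)"
    then obtain y where y: "w = qf n (\<lambda>a b. qcnj (q a) * A a b * q b) y" "qn n y = 1"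
      unfolding numerical_range_qf by blast
    define x where "x = (\<lambda>i. q i * y i)"
    have "qn n x = qn n y" unfolding qn_def x_def
      by (intro sum.cong refl) (use u in \<open>simp add: qcnj_mult mult.assoc[symmetric]\<close>, simp add: mult.assoc)
    moreover have "qf n A x = w" unfolding y qf_def x_def
      by (intro sum.cong refl) (simp add: qcnj_mult mult.assoc)
    ultimately show "w \<in> numerical_range n A" using y(2) unfolding numerical_range_qf by force
  next
    fix w assume "w \<in> numerical_range n A"
    then obtain x where x: "w = qf n A x" "qn n x = 1"
      unfolding numerical_range_qf by blast
    define y where "y = (\<lambda>i. qcnj (q i) * x i)"
    have "qn n y = qn n x" unfolding qn_def y_def
    proof (intro sum.cong refl)
      fix i assume "i \<in> {..<n}"
      then have "q i * qcnj (q i) = 1" using u' by simp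
      then show "qcnj (qcnj (q i) * x i) * (qcnj (q i) * x i) = qcnj (x i) * x i"
        by (simp add: qcnj_mult cc mult.assoc) (metis mult.assoc mult_1)
    qed
    moreover have "qf n (\<lambda>a b. qcnj (q a) * A a b * q b) y = w" unfolding x qf_def y_def
    proof (intro sum.cong refl)
      fix i j assume i: "i \<in> {..<n}" and j: "j \<in> {..<n}"
      have e: "qcnj (qcnj (q i) * x i) * (qcnj (q i) * A i j * q j) * (qcnj (q j) * x j)
          = qcnj (x i) * (q i * qcnj (q i)) * A i j * (q j * qcnj (q j)) * x j"
        by (simp add: qcnj_mult cc mult.assoc)
      show "qcnj (qcnj (q i) * x i) * (qcnj (q i) * A i j * q j) * (qcnj (q j) * x j) = qcnj (x i) * A i j * x j"
        unfolding e using u' i j by simp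
    qed
    ultimately show "w \<in> numerical_range n (\<lambda>a b. qcnj (q a) * A a b * q b)"
      using x(2) unfolding numerical_range_qf by force
  qed
qed

theorem corollary4p3:
  fixes n :: nat and D N :: "nat \<Rightarrow> nat \<Rightarrow> quat"
  assumes D_diag: "\<forall>i<n. \<forall>j<n. i \<noteq> j \<longrightarrow> D i j = 0"
    and D_real: "\<forall>i<n. D i i \<in> \<real>"
    and N_strict_upper: "\<forall>i<n. \<forall>j<n. j \<le> i \<longrightarrow> N i j = 0"
    and N_cycle_free: "cycle_free n N"
  shows "convex (numerical_range n (\<lambda>i j. D i j + N i j))"
proof -
  obtain q where q1: "\<forall>i<n. qcnj (q i) * q i = 1" and q2: "\<forall>i<n. \<forall>j<n. qcnj (q i) * N i j * q j \<in> \<real>"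
    using forest_phase[OF N_strict_upper N_cycle_free] by blast
  define R where "R = (\<lambda>a b. qcnj (q a) * (D a b + N a b) * q b)"
  have "realmat n R"
  proof
    fix a b assume a: "a < n" and b: "b < n"
    show "R a b \<in> \<real>"
    proof (cases "a = b")
      case True
      then have "R a b = qcnj (q a) * D a a * q a" unfolding R_def using N_strict_upper a by simp
      then show ?thesis using real_conj_unit[OF _ q1[rule_format, OF a]] D_real a by simp
    next
      case False
      then have "R a b = qcnj (q a) * N a b * q b" unfolding R_def using D_diag a b by simp
      then show ?thesis using q2 a b by simp
    qed
  qed
  then have "convex (numerical_range n R)" by (rule realmat.W_convex)
  then show ?thesis unfolding R_def diag_unitary[OF q1] .
qed


end
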